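(* Let $u\in V$ and let $t\le\lceil\frac{n-\kappa}{2}\rceil$ be a positive integer. If there exists a $\kappa$-cut $U$ with $u\notin U$ and $|\mathrm{Side}_U(u)|\le t$, then there is a unique such $\kappa$-cut, denoted $\mathrm{Small}_t(u)$, with $u\notin\mathrm{Small}_t(u)$, $|\mathrm{Side}_{\mathrm{Small}_t(u)}(u)|\le t$, and $\mathrm{Side}_{\mathrm{Small}_t(u)}(u)\subseteq\mathrm{Side}_U(u)$ for every $\kappa$-cut $U$ with $u\notin U$ and $|\mathrm{Side}_U(u)|\le t$.
   Context: $G=(V,E)$ is a finite, simple, connected, undirected, non-complete graph with $n=|V|$; $\kappa$ is its vertex connectivity, assumed $\kappa<n/4$. A cut is a set $U\subset V$ whose removal disconnects $G$; a $\kappa$-cut is a cut of size $\kappa$; a side of $U$ is a connected component of the subgraph induced on $V\setminus U$; for $x\notin U$, $\mathrm{Side}_U(x)$ is the side of $U$ containing $x$. *)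

theory Defs
  imports Complex_Main
begin

definition simple_graph :: "'a set \<Rightarrow> ('a \<Rightarrow> 'a \<Rightarrow> bool) \<Rightarrow> bool" where
  "simple_graph V E \<longleftrightarrow> finite V \<and> (\<forall>x y. E x y \<longrightarrow> x \<in> V \<and> y \<in> V)
     \<and> (\<forall>x y. E x y \<longrightarrow> E y x) \<and> (\<forall>x. \<not> E x x)"

definition reach_in :: "('a \<Rightarrow> 'a \<Rightarrow> bool) \<Rightarrow> 'a set \<Rightarrow> 'a \<Rightarrow> 'a \<Rightarrow> bool" where
  "reach_in E S x y \<longleftrightarrow> x \<in> S \<and> y \<in> S \<and> (\<lambda>a b. E a b \<and> a \<in> S \<and> b \<in> S)\<^sup>*\<^sup>* x y"

definition graph_connected :: "'a set \<Rightarrow> ('a \<Rightarrow> 'a \<Rightarrow> bool) \<Rightarrow> bool" where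
  "graph_connected V E \<longleftrightarrow> V \<noteq> {} \<and> (\<forall>x\<in>V. \<forall>y\<in>V. reach_in E V x y)"

definition graph_complete :: "'a set \<Rightarrow> ('a \<Rightarrow> 'a \<Rightarrow> bool) \<Rightarrow> bool" where
  "graph_complete V E \<longleftrightarrow> (\<forall>x\<in>V. \<forall>y\<in>V. x \<noteq> y \<longrightarrow> E x y)"

definition is_cut :: "'a set \<Rightarrow> ('a \<Rightarrow> 'a \<Rightarrow> bool) \<Rightarrow> 'a set \<Rightarrow> bool" where
  "is_cut V E U \<longleftrightarrow> U \<subseteq> V \<and> (\<exists>x\<in>V - U. \<exists>y\<in>V - U. \<not> reach_in E (V - U) x y)"

text \<open>Vertex connectivity: minimum size of a cut (G non-complete).\<close>
definition vertex_connectivity :: "'a set \<Rightarrow> ('a \<Rightarrow> 'a \<Rightarrow> bool) \<Rightarrow> nat" where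
  "vertex_connectivity V E = Min {card U | U. is_cut V E U}"

definition is_kappa_cut :: "'a set \<Rightarrow> ('a \<Rightarrow> 'a \<Rightarrow> bool) \<Rightarrow> 'a set \<Rightarrow> bool" where
  "is_kappa_cut V E U \<longleftrightarrow> is_cut V E U \<and> card U = vertex_connectivity V E"

definition side :: "'a set \<Rightarrow> ('a \<Rightarrow> 'a \<Rightarrow> bool) \<Rightarrow> 'a set \<Rightarrow> 'a \<Rightarrow> 'a set" where
  "side V E U x = {y. reach_in E (V - U) x y}"

end

theory Submission
  imports Defs
begin

lemma reach_closed:
  assumes "reach_in E S u y" "u \<in> X" "\<And>x y. x \<in> X \<Longrightarrow> y \<in> S \<Longrightarrow> E x y \<Longrightarrow> y \<in> X"
  shows "y \<in> X"
proof -
  have "(\<lambda>a b. E a b \<and> a \<in> S \<and> b \<in> S)\<^sup>*\<^sup>* u y" using assms(1) unfolding reach_in_def by blast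
  then show ?thesis
    by (induction rule: rtranclp_induct) (use assms in auto)
qed

lemma reach_step:
  assumes "reach_in E S u x" "E x y" "y \<in> S"
  shows "reach_in E S u y"
  using assms unfolding reach_in_def by (auto intro: rtranclp.rtrancl_into_rtrancl)

lemma reach_refl: "x \<in> S \<Longrightarrow> reach_in E S x x" unfolding reach_in_def by auto

lemma reach_sym:
  assumes "\<And>x y. E x y \<Longrightarrow> E y x" "reach_in E S x y"
  shows "reach_in E S y x"
proof -
  have "(\<lambda>a b. E a b \<and> a \<in> S \<and> b \<in> S)\<^sup>*\<^sup>* x y" using assms(2) unfolding reach_in_def by blast
  then have "(\<lambda>a b. E a b \<and> a \<in> S \<and> b \<in> S)\<^sup>*\<^sup>* y x"
  proof (induction rule: rtranclp_induct)
    case base then show ?case by simp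
  next
    case (step y z) then show ?case using assms(1)
      by (metis (mono_tags, lifting) converse_rtranclp_into_rtranclp)
  qed
  then show ?thesis using assms(2) unfolding reach_in_def by blast
qed

lemma reach_trans: "reach_in E S x y \<Longrightarrow> reach_in E S y z \<Longrightarrow> reach_in E S x z"
  unfolding reach_in_def by (meson rtranclp_trans)

lemma side_closed:
  assumes "x \<in> side V E U u" "y \<in> V - U" "E x y"
  shows "y \<in> side V E U u"
  using assms reach_step unfolding side_def by fastforce

lemma side_sub: "side V E U u \<subseteq> V - U" unfolding side_def reach_in_def by auto

lemma side_self: "u \<in> V - U \<Longrightarrow> u \<in> side V E U u" unfolding side_def by (simp add: reach_refl)

lemma cut_lemma:
  assumes "S \<subseteq> V" "X \<subseteq> V - S" "u \<in> X"
    and cl: "\<And>a b. a \<in> X \<Longrightarrow> b \<in> V - S \<Longrightarrow> E a b \<Longrightarrow> b \<in> X"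
    and "y \<in> V - S" "y \<notin> X"
  shows "is_cut V E S" "side V E S u \<subseteq> X"
proof -
  show "side V E S u \<subseteq> X" unfolding side_def using reach_closed[of E "V - S" u _ X] assms(3) cl by blast
  have "\<not> reach_in E (V - S) u y" using reach_closed[of E "V - S" u y X] assms(3,6) cl by blast
  then show "is_cut V E S" unfolding is_cut_def using assms by blast
qed

lemma kappa_le:
  assumes "finite V" "is_cut V E C"
  shows "vertex_connectivity V E \<le> card C"
proof -
  have "{card U | U. is_cut V E U} \<subseteq> card ` Pow V" unfolding is_cut_def by auto
  hence "finite {card U | U. is_cut V E U}" using assms(1) finite_subset by blast
  then show ?thesis unfolding vertex_connectivity_def using assms(2) by (intro Min_le) auto
qed

lemma crossing:
  assumes G: "simple_graph V E"
    and U: "is_kappa_cut V E U" "u \<notin> U" "card (side V E U u) \<le> t"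
    and W: "is_kappa_cut V E W" "u \<notin> W" "card (side V E W u) \<le> t"
    and u: "u \<in> V"
    and n: "4 * real (vertex_connectivity V E) < real (card V)"
    and tb: "int t \<le> \<lceil>(real (card V) - real (vertex_connectivity V E)) / 2\<rceil>"
  shows "\<exists>C. is_kappa_cut V E C \<and> u \<notin> C \<and> side V E C u \<subseteq> side V E U u \<inter> side V E W u"
proof -
  let ?k = "vertex_connectivity V E"
  define A where "A = side V E U u"
  define B where "B = side V E W u"
  define A' where "A' = V - U - A"
  define B' where "B' = V - W - B"
  define C1 where "C1 = (A \<union> U) \<inter> (B \<union> W) - A \<inter> B"
  define C2 where "C2 = (A' \<union> U) \<inter> (B' \<union> W) - A' \<inter> B'"
  have fin: "finite V" using G simple_graph_def by auto
  have sym: "\<And>x y. E x y \<Longrightarrow> E y x" and EV: "\<And>x y. E x y \<Longrightarrow> x \<in> V \<and> y \<in> V"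
    using G unfolding simple_graph_def by auto
  have UV: "U \<subseteq> V" "card U = ?k" using U(1) unfolding is_kappa_cut_def is_cut_def by auto
  have WV: "W \<subseteq> V" "card W = ?k" using W(1) unfolding is_kappa_cut_def is_cut_def by auto
  have AV: "A \<subseteq> V - U" unfolding A_def by (rule side_sub)
  have BV: "B \<subseteq> V - W" unfolding B_def by (rule side_sub)
  have uA: "u \<in> A" unfolding A_def using u U(2) side_self[of u V U E] by blast
  have uB: "u \<in> B" unfolding B_def using u W(2) side_self[of u V W E] by blast
  have Acl: "y \<in> A \<union> U" if "x \<in> A" "E x y" for x y
    using side_closed[of x V E U u y] that EV unfolding A_def by blast
  have Bcl: "y \<in> B \<union> W" if "x \<in> B" "E x y" for x y
    using side_closed[of x V E W u y] that EV unfolding B_def by blast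
  have A'cl: "y \<in> A' \<union> U" if "x \<in> A'" "E x y" for x y
    using Acl[of y x] sym[OF that(2)] that EV unfolding A'_def by blast
  have B'cl: "y \<in> B' \<union> W" if "x \<in> B'" "E x y" for x y
    using Bcl[of y x] sym[OF that(2)] that EV unfolding B'_def by blast
  have C1V: "C1 \<subseteq> V" using AV UV unfolding C1_def by blast
  have C2V: "C2 \<subseteq> V" using UV unfolding C2_def A'_def by blast
  have cl1: "y \<in> A \<inter> B" if "x \<in> A \<inter> B" "y \<in> V - C1" "E x y" for x y
    using Acl[of x y] Bcl[of x y] that unfolding C1_def by blast
  have finA: "finite A" "finite B" using AV BV fin finite_subset by blast+
  have finUW: "finite U" "finite W" using UV WV fin finite_subset by blast+
  have cardAB: "card A + card B \<le> 2 * t" using U(3) W(3) unfolding A_def B_def by simp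
  have ABne: "card (A \<inter> B) \<ge> 1"
  proof -
    have "A \<inter> B \<noteq> {}" using uA uB by blast
    moreover have "finite (A \<inter> B)" using finA by blast
    ultimately have "card (A \<inter> B) \<noteq> 0" by simp
    then show ?thesis by simp
  qed
  have kV: "?k < card V" using n by linarith
  have "real (4 * ?k) < real (card V)" using n by simp
  hence n4: "4 * ?k < card V" by (simp only: of_nat_less_iff)
  have "real t < (real (card V) - real ?k) / 2 + 1"
    using tb ceiling_correct[of "(real (card V) - real ?k) / 2"] by linarith
  hence "2 * real t < real (card V) - real ?k + 2" by (simp add: field_simps)
  moreover have e1: "real (card V - ?k + 2) = real (card V) - real ?k + 2" using kV by (simp add: of_nat_diff)
  ultimately have "real (2 * t) < real (card V - ?k + 2)" unfolding e1 by simp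
  hence "2 * t < card V - ?k + 2" by (simp only: of_nat_less_iff)
  hence t2: "2 * t \<le> card V - ?k + 1" by linarith
  have C1le: "card C1 \<le> ?k"
  proof (cases "A' \<inter> B' = {}")
    case False
    then obtain y where y: "y \<in> A' \<inter> B'" by blast
    have "is_cut V E C2"
    proof (rule cut_lemma[of C2 V "A' \<inter> B'" y E u])
      show "C2 \<subseteq> V" by (rule C2V)
      show "A' \<inter> B' \<subseteq> V - C2" unfolding C2_def A'_def by blast
      show "y \<in> A' \<inter> B'" by (rule y)
      show "x' \<in> A' \<inter> B'" if "x \<in> A' \<inter> B'" "x' \<in> V - C2" "E x x'" for x x'
        using A'cl[of x x'] B'cl[of x x'] that unfolding C2_def by blast
      show "u \<in> V - C2" using u uA U(2) unfolding C2_def A'_def by blast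
      show "u \<notin> A' \<inter> B'" using uA unfolding A'_def by blast
    qed
    hence "?k \<le> card C2" using kappa_le fin by blast
    moreover have "card C1 + card C2 = 2 * ?k"
    proof -
      have e1: "C1 \<union> C2 = U \<union> W" using AV BV UV WV unfolding C1_def C2_def A'_def B'_def by blast
      have e2: "C1 \<inter> C2 = U \<inter> W" using AV BV UV WV unfolding C1_def C2_def A'_def B'_def by blast
      have "finite C1" "finite C2" using C1V C2V fin finite_subset by blast+
      hence "card C1 + card C2 = card (C1 \<union> C2) + card (C1 \<inter> C2)" by (rule card_Un_Int)
      also have "\<dots> = card U + card W" using e1 e2 card_Un_Int[OF finUW] by simp
      finally show ?thesis using UV WV by simp
    qed
    ultimately show ?thesis by linarith
  next
    case True
    define X where "X = (A \<union> B) \<inter> (U \<union> W)"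
    have VU: "V = (A \<union> B) \<union> (U \<union> W)" using True AV BV UV WV unfolding A'_def B'_def by blast
    have finX: "finite X" "finite (A \<union> B)" "finite (U \<union> W)" using finA finUW unfolding X_def by auto
    have "card V + card X = card (A \<union> B) + card (U \<union> W)"
      using VU card_Un_Int[OF finX(2,3)] unfolding X_def by simp
    moreover have "card C1 = card (U \<inter> W) + card X"
    proof -
      have "C1 = (U \<inter> W) \<union> X" using AV BV unfolding C1_def X_def by blast
      moreover have "(U \<inter> W) \<inter> X = {}" using AV BV unfolding X_def by blast
      ultimately show ?thesis using finX finUW by (simp add: card_Un_disjoint)
    qed
    moreover have "card (U \<union> W) + card (U \<inter> W) = 2 * ?k" using card_Un_Int[OF finUW] UV WV by simp
    moreover have "card (A \<union> B) + card (A \<inter> B) = card A + card B" using card_Un_Int[OF finA] by simp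
    ultimately show ?thesis using cardAB ABne t2 kV by linarith
  qed
  obtain y where y: "y \<in> V - C1" "y \<notin> A \<inter> B"
  proof (cases "A' \<inter> B' = {}")
    case False
    then obtain y where "y \<in> A' \<inter> B'" by blast
    then show ?thesis using that unfolding C1_def A'_def B'_def by blast
  next
    case True
    have "A' \<inter> B \<noteq> {}"
    proof
      assume e: "A' \<inter> B = {}"
      have "A' \<subseteq> W" using True e unfolding A'_def B'_def by blast
      hence "card A' \<le> card W" using finUW by (intro card_mono) auto
      hence cA': "card A' \<le> ?k" using WV by simp
      have "V = A \<union> U \<union> A'" using AV UV unfolding A'_def by blast
      moreover have "finite A'" using fin unfolding A'_def by auto
      moreover have "card (A \<union> U) = card A + card U"
        using AV finA finUW by (intro card_Un_disjoint) auto
      moreover have "card (A \<union> U \<union> A') = card (A \<union> U) + card A'"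
        using finA finUW \<open>finite A'\<close> unfolding A'_def by (intro card_Un_disjoint) auto
      ultimately have "card V = card A + card U + card A'" by simp
      hence "card V \<le> t + 2 * ?k" using cA' UV U(3) unfolding A_def by linarith
      hence cV: "card V \<le> 1" using t2 n4 kV by linarith
      obtain a b where ab: "a \<in> V - U" "b \<in> V - U" "\<not> reach_in E (V - U) a b"
        using U(1) unfolding is_kappa_cut_def is_cut_def by blast
      hence "a \<noteq> b" using reach_refl[of a "V - U" E] by blast
      hence "card {a, b} \<le> card V" using ab fin by (intro card_mono) auto
      then show False using cV \<open>a \<noteq> b\<close> by simp
    qed
    then obtain y where "y \<in> A' \<inter> B" by blast
    then show ?thesis using that unfolding C1_def A'_def by blast
  qed
  have ABC: "A \<inter> B \<subseteq> V - C1" using AV unfolding C1_def by blast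
  have uAB: "u \<in> A \<inter> B" using uA uB by blast
  have cl1': "\<And>a b. a \<in> A \<inter> B \<Longrightarrow> b \<in> V - C1 \<Longrightarrow> E a b \<Longrightarrow> b \<in> A \<inter> B"
    using cl1 by blast
  note CL = cut_lemma[where S=C1 and V=V and X="A \<inter> B" and u=u and E=E and y=y]
  have cut: "is_cut V E C1" by (rule CL(1)[OF C1V ABC uAB cl1' y(1) y(2)])
  have sd: "side V E C1 u \<subseteq> A \<inter> B" by (rule CL(2)[OF C1V ABC uAB cl1' y(1) y(2)])
  have "?k \<le> card C1" using kappa_le fin cut by blast
  hence "is_kappa_cut V E C1" using C1le cut unfolding is_kappa_cut_def by simp
  moreover have "u \<notin> C1" using uA uB unfolding C1_def by blast
  ultimately show ?thesis using sd unfolding A_def B_def by blast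
qed

lemma cut_determined:
  assumes G: "simple_graph V E" and S: "is_kappa_cut V E S" and u: "u \<in> V" "u \<notin> S"
  shows "S = {y \<in> V - side V E S u. \<exists>x \<in> side V E S u. E x y}"
proof -
  define C where "C = side V E S u"
  define N where "N = {y \<in> V - C. \<exists>x \<in> C. E x y}"
  have fin: "finite V" using G simple_graph_def by auto
  have sym: "\<And>x y. E x y \<Longrightarrow> E y x" using G unfolding simple_graph_def by auto
  have SV: "S \<subseteq> V" using S unfolding is_kappa_cut_def is_cut_def by auto
  have NS: "N \<subseteq> S" using side_closed[of _ V E S u] unfolding N_def C_def by blast
  have uC: "u \<in> C" unfolding C_def using u side_self[of u V S E] by blast
  obtain a b where ab: "a \<in> V - S" "b \<in> V - S" "\<not> reach_in E (V - S) a b"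
    using S unfolding is_kappa_cut_def is_cut_def by blast
  obtain y where y: "y \<in> V - S" "y \<notin> C"
  proof -
    have "\<not> (a \<in> C \<and> b \<in> C)"
    proof
      assume "a \<in> C \<and> b \<in> C"
      hence "reach_in E (V - S) u a" "reach_in E (V - S) u b" unfolding C_def side_def by auto
      hence "reach_in E (V - S) a u" "reach_in E (V - S) u b" using reach_sym[of E "V - S" u a] sym by blast+
      hence "reach_in E (V - S) a b" by (rule reach_trans)
      then show False using ab by simp
    qed
    then show ?thesis using that ab by blast
  qed
  have "is_cut V E N"
  proof (rule cut_lemma[of N V C u E y])
    show "N \<subseteq> V" unfolding N_def by blast
    show "C \<subseteq> V - N" unfolding N_def C_def using side_sub[of V E S u] by blast
    show "u \<in> C" by (rule uC)
    show "x' \<in> C" if "x \<in> C" "x' \<in> V - N" "E x x'" for x x'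
      using that unfolding N_def by blast
    show "y \<in> V - N" using y NS by blast
    show "y \<notin> C" by (rule y)
  qed
  hence "card S \<le> card N" using kappa_le fin S unfolding is_kappa_cut_def by metis
  moreover have "finite S" using SV fin finite_subset by blast
  moreover have "card N \<le> card S" using card_mono[OF calculation(2) NS] .
  ultimately have "N = S" using card_subset_eq[OF \<open>finite S\<close> NS] by simp
  then show ?thesis unfolding N_def C_def by simp
qed

theorem theorem6:
  fixes V :: "'a set" and E :: "'a \<Rightarrow> 'a \<Rightarrow> bool" and u :: 'a and t :: nat
  assumes "simple_graph V E" and "graph_connected V E" and "\<not> graph_complete V E"
    and "4 * real (vertex_connectivity V E) < real (card V)"
    and "u \<in> V" and "0 < t"
    and "int t \<le> \<lceil>(real (card V) - real (vertex_connectivity V E)) / 2\<rceil>"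
    and "\<exists>U. is_kappa_cut V E U \<and> u \<notin> U \<and> card (side V E U u) \<le> t"
  shows "\<exists>!S. is_kappa_cut V E S \<and> u \<notin> S \<and> card (side V E S u) \<le> t \<and>
           (\<forall>U. is_kappa_cut V E U \<and> u \<notin> U \<and> card (side V E U u) \<le> t
                \<longrightarrow> side V E S u \<subseteq> side V E U u)"
proof -
  let ?P = "\<lambda>U. is_kappa_cut V E U \<and> u \<notin> U \<and> card (side V E U u) \<le> t"
  have fin: "finite V" using assms(1) simple_graph_def by auto
  obtain U0 where "?P U0" using assms(8) by blast
  then obtain S where PS: "?P S" and Smin: "\<And>U. ?P U \<Longrightarrow> card (side V E S u) \<le> card (side V E U u)"
    using ex_has_least_nat[of ?P U0 "\<lambda>U. card (side V E U u)"] by blast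
  have finS: "finite (side V E S u)" using fin side_sub[of V E S u] finite_subset by blast
  have Ssub: "side V E S u \<subseteq> side V E W u" if PW: "?P W" for W
  proof -
    obtain C where C: "is_kappa_cut V E C" "u \<notin> C" "side V E C u \<subseteq> side V E S u \<inter> side V E W u"
      using crossing[OF assms(1) _ _ _ _ _ _ assms(5) assms(4) assms(7), of S W] PS PW by blast
    have "card (side V E C u) \<le> card (side V E S u)" using C(3) finS by (intro card_mono) auto
    hence "?P C" using C PS by simp
    hence "card (side V E S u) \<le> card (side V E C u)" by (rule Smin)
    moreover have "side V E C u \<subseteq> side V E S u" using C(3) by blast
    moreover have "card (side V E C u) \<le> card (side V E S u)" using card_mono[OF finS] calculation(2) .
    ultimately have "side V E C u = side V E S u" using card_subset_eq[OF finS] by simp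
    then show ?thesis using C(3) by blast
  qed
  have ex: "?P S \<and> (\<forall>U. ?P U \<longrightarrow> side V E S u \<subseteq> side V E U u)" using PS Ssub by blast
  have un: "S' = S" if S': "?P S' \<and> (\<forall>U. ?P U \<longrightarrow> side V E S' u \<subseteq> side V E U u)" for S'
  proof -
    have "side V E S' u = side V E S u" using S' PS Ssub by blast
    moreover have "S' = {y \<in> V - side V E S' u. \<exists>x \<in> side V E S' u. E x y}"
      using cut_determined[OF assms(1) _ assms(5)] S' by blast
    moreover have "S = {y \<in> V - side V E S u. \<exists>x \<in> side V E S u. E x y}"
      using cut_determined[OF assms(1) _ assms(5)] PS by blast
    ultimately show "S' = S" by simp
  qed
  show ?thesis using ex un by (intro ex1I[of _ S]) blast+
qed

end
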